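(* Let $d\ge2$ and let $(\tau_e)_{e\in\mathbb{E}^d}$ be i.i.d. nonnegative edge weights on $\mathbb{Z}^d$. Let $0<a<b$ be such that for every $\delta>0$, $\mathbb{P}(\tau_e\in[a-\delta,a])>0$ and $\mathbb{P}(\tau_e\in[b,2b])>0$. Let $\epsilon<(b-a)/(2b+3a)$ and let $n,m_1,m_2,m_3$ be positive integers with $$1\le m_2\le\epsilon m_3\le\epsilon^2m_1\le\epsilon^3 n.$$ Then for any $\delta>0$, on the event $E_n$ we have $$T_{\Lambda(n)}(-n\mathbf{e}_1,y)\le a(n+2m_3)+am_2\quad\text{for all }y\in\hat R,$$ and $$T_{\Lambda(n)}(x,0)\ge(a-\delta)(n+2m_3)+bm_2\quad\text{for all }x\in\mathbb{Z}^d\text{ with }\|x\|_1=n.$$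
   Context: $\mathbf{e}_i$ is the $i$-th coordinate vector. $\Lambda(n)=\{x\in\mathbb{Z}^d:\|x\|_1\le n\}$. $R=R(m_1,m_2,m_3)=\{x\in\mathbb{Z}^d:-m_1\le x\cdot\mathbf{e}_1\le m_2,\ \sum_{i=2}^d|x\cdot\mathbf{e}_i|\le m_3\}$, and $\hat R=\{x\in R:\exists y\in\mathbb{Z}^d\setminus R\text{ with }\|x-y\|_1=1\}$. $L=\{k\mathbf{e}_1:k=-n,\dots,-m_1\}$. $E_n$ (which depends on $a,b,\delta,n,m_1,m_2,m_3$) is the event that (1) $\tau_e\in[a-\delta,a]$ for all edges $e=\{x,y\}$ with $x,y\in\hat R\cup L$, and (2) $\tau_e\in[b,2b]$ for all other edges $e=\{x,y\}$ with $x,y\in\Lambda(n)$. $T_{\Lambda(n)}(x,y)$ is the infimum of $\sum_{e\in\gamma}\tau_e$ over nearest-neighbor paths $\gamma$ from $x$ to $y$ all of whose vertices lie in $\Lambda(n)$. *)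

theory Defs
  imports Complex_Main
begin

text \<open>Points of Z^d are functions nat => int vanishing at coordinates >= d;
  coordinate 0 plays the role of e_1.  Edges are unordered pairs {x,y}.\<close>

type_synonym pt = "nat \<Rightarrow> int"

definition Zd :: "nat \<Rightarrow> pt set" where
  "Zd d = {x. \<forall>i\<ge>d. x i = 0}"

definition norm1 :: "nat \<Rightarrow> pt \<Rightarrow> int" where
  "norm1 d x = (\<Sum>i<d. \<bar>x i\<bar>)"

definition unitv :: "nat \<Rightarrow> pt" where
  "unitv i = (\<lambda>j. if j = i then 1 else 0)"

definition adj :: "nat \<Rightarrow> pt \<Rightarrow> pt \<Rightarrow> bool" where
  "adj d x y \<longleftrightarrow> x \<in> Zd d \<and> y \<in> Zd d \<and> norm1 d (\<lambda>i. x i - y i) = 1"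

definition edges :: "nat \<Rightarrow> pt set set" where
  "edges d = {{x, y} | x y. adj d x y}"

definition Lambda :: "nat \<Rightarrow> int \<Rightarrow> pt set" where
  "Lambda d n = {x \<in> Zd d. norm1 d x \<le> n}"

definition Rbox :: "nat \<Rightarrow> int \<Rightarrow> int \<Rightarrow> int \<Rightarrow> pt set" where
  "Rbox d m1 m2 m3 = {x \<in> Zd d. - m1 \<le> x 0 \<and> x 0 \<le> m2 \<and> (\<Sum>i\<in>{1..<d}. \<bar>x i\<bar>) \<le> m3}"

definition Rhat :: "nat \<Rightarrow> int \<Rightarrow> int \<Rightarrow> int \<Rightarrow> pt set" where
  "Rhat d m1 m2 m3 = {x \<in> Rbox d m1 m2 m3.
      \<exists>y \<in> Zd d - Rbox d m1 m2 m3. norm1 d (\<lambda>i. x i - y i) = 1}"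

definition Lseg :: "int \<Rightarrow> int \<Rightarrow> pt set" where
  "Lseg n m1 = {(\<lambda>i. k * unitv 0 i) | k. - n \<le> k \<and> k \<le> - m1}"

definition is_path_in :: "nat \<Rightarrow> pt set \<Rightarrow> pt \<Rightarrow> pt \<Rightarrow> pt list \<Rightarrow> bool" where
  "is_path_in d A x y p \<longleftrightarrow> p \<noteq> [] \<and> hd p = x \<and> last p = y \<and> set p \<subseteq> A
     \<and> (\<forall>i. Suc i < length p \<longrightarrow> adj d (p ! i) (p ! Suc i))"

definition path_weight :: "(pt set \<Rightarrow> real) \<Rightarrow> pt list \<Rightarrow> real" where
  "path_weight \<tau> p = (\<Sum>i<length p - 1. \<tau> {p ! i, p ! Suc i})"

definition passage_time :: "nat \<Rightarrow> (pt set \<Rightarrow> real) \<Rightarrow> pt set \<Rightarrow> pt \<Rightarrow> pt \<Rightarrow> real" where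
  "passage_time d \<tau> A x y = Inf {path_weight \<tau> p | p. is_path_in d A x y p}"

definition event_E :: "nat \<Rightarrow> real \<Rightarrow> real \<Rightarrow> real \<Rightarrow> int \<Rightarrow> int \<Rightarrow> int \<Rightarrow> int
    \<Rightarrow> (pt set \<Rightarrow> real) \<Rightarrow> bool" where
  "event_E d a b \<delta> n m1 m2 m3 \<tau> \<longleftrightarrow>
     (\<forall>x y. adj d x y \<longrightarrow> x \<in> Rhat d m1 m2 m3 \<union> Lseg n m1 \<longrightarrow> y \<in> Rhat d m1 m2 m3 \<union> Lseg n m1
        \<longrightarrow> a - \<delta> \<le> \<tau> {x, y} \<and> \<tau> {x, y} \<le> a)
   \<and> (\<forall>x y. adj d x y \<longrightarrow> x \<in> Lambda d n \<longrightarrow> y \<in> Lambda d n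
        \<longrightarrow> \<not> (x \<in> Rhat d m1 m2 m3 \<union> Lseg n m1 \<and> y \<in> Rhat d m1 m2 m3 \<union> Lseg n m1)
        \<longrightarrow> b \<le> \<tau> {x, y} \<and> \<tau> {x, y} \<le> 2 * b)"

end

theory Submission
  imports Defs
begin

lemma succ_nth: "(\<forall>i. Suc i < length p \<longrightarrow> P (p!i) (p!Suc i)) \<longleftrightarrow> successively P p"
proof (induction P p rule: successively.induct)
  case (3 P x y xs)
  have "(\<forall>i. Suc i < length (x#y#xs) \<longrightarrow> P ((x#y#xs)!i) ((x#y#xs)!Suc i)) \<longleftrightarrow>
        P x y \<and> (\<forall>i. Suc i < length (y#xs) \<longrightarrow> P ((y#xs)!i) ((y#xs)!Suc i))"
    (is "?L \<longleftrightarrow> ?R")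
  proof
    assume ?L
    then show ?R by (metis Suc_less_eq length_Cons nth_Cons_Suc nth_Cons_0 zero_less_Suc)
  next
    assume ?R
    then show ?L by (metis Suc_less_eq length_Cons nth_Cons_Suc nth_Cons_0 not0_implies_Suc)
  qed
  then show ?case using 3 by simp
qed auto

lemma path_weight_Cons2: "path_weight \<tau> (x # y # p) = \<tau> {x, y} + path_weight \<tau> (y # p)"
  unfolding path_weight_def by (simp only: length_Cons diff_Suc_1 sum.lessThan_Suc_shift) simp

lemma path_weight_single: "path_weight \<tau> [x] = 0"
  unfolding path_weight_def by simp

lemma path_lb_aux:
  assumes "successively (adj d) p" "set p \<subseteq> A" "p \<noteq> []"
    and "\<forall>u w. u\<in>A \<longrightarrow> w\<in>A \<longrightarrow> adj d u w \<longrightarrow> \<Psi> u - \<Psi> w \<le> \<tau> {u,w}"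
  shows "\<Psi> (hd p) - \<Psi> (last p) \<le> path_weight \<tau> p"
  using assms
proof (induction p rule: induct_list012)
  case 1 then show ?case by simp
next
  case (2 x) then show ?case by (simp add: path_weight_single)
next
  case (3 x y zs)
  have "\<Psi> y - \<Psi> (last (y#zs)) \<le> path_weight \<tau> (y#zs)"
    using 3 by auto
  moreover have "\<Psi> x - \<Psi> y \<le> \<tau> {x,y}" using 3 by auto
  ultimately show ?case by (simp add: path_weight_Cons2)
qed

lemma path_lb:
  assumes "is_path_in d A x y p"
    and "\<forall>u w. u\<in>A \<longrightarrow> w\<in>A \<longrightarrow> adj d u w \<longrightarrow> \<Psi> u - \<Psi> w \<le> \<tau> {u,w}"
  shows "\<Psi> x - \<Psi> y \<le> path_weight \<tau> p"
  using path_lb_aux[of d p A \<Psi> \<tau>] assms unfolding is_path_in_def succ_nth by auto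

lemma path_ub:
  assumes "successively (adj d) p" "set p \<subseteq> B"
    and "\<forall>u w. u\<in>B \<longrightarrow> w\<in>B \<longrightarrow> adj d u w \<longrightarrow> \<tau> {u,w} \<le> a"
  shows "path_weight \<tau> p \<le> a * (length p - 1)"
proof -
  have "path_weight \<tau> p \<le> (\<Sum>i<length p - 1. a)"
    unfolding path_weight_def
  proof (rule sum_mono)
    fix i assume "i \<in> {..<length p - 1}"
    then have i: "Suc i < length p" by auto
    then have "adj d (p!i) (p!Suc i)" using assms(1) succ_nth by blast
    moreover have "p!i \<in> B" "p!Suc i \<in> B" using i assms(2) by auto
    ultimately show "\<tau> {p ! i, p ! Suc i} \<le> a" using assms(3) by blast
  qed
  then show ?thesis by (simp add: mult.commute)
qed

lemma adj_edge: "adj d u w \<Longrightarrow> {u, w} \<in> edges d"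
  unfolding edges_def by blast

lemma path_nonneg:
  assumes "successively (adj d) p" "\<forall>e\<in>edges d. \<tau> e \<ge> 0"
  shows "path_weight \<tau> p \<ge> 0"
  unfolding path_weight_def
proof (rule sum_nonneg)
  fix i assume "i \<in> {..<length p - 1}"
  then have i: "Suc i < length p" by auto
  then have "adj d (p!i) (p!Suc i)" using assms(1) succ_nth by blast
  then show "\<tau> {p ! i, p ! Suc i} \<ge> 0" using assms(2) adj_edge by blast
qed

lemma norm1_nonneg: "norm1 d v \<ge> 0"
  unfolding norm1_def by (simp add: sum_nonneg)

lemma norm1_zero_eq:
  assumes "x \<in> Zd d" "y \<in> Zd d" "norm1 d (\<lambda>i. x i - y i) = 0"
  shows "x = y"
proof
  fix i
  show "x i = y i"
  proof (cases "i < d")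
    case True
    have "\<forall>j\<in>{..<d}. \<bar>x j - y j\<bar> = 0"
      using assms(3) unfolding norm1_def by (subst sum_nonneg_eq_0_iff[symmetric]) auto
    then show ?thesis using True by auto
  next
    case False then show ?thesis using assms(1,2) unfolding Zd_def by auto
  qed
qed

lemma sum_upd:
  fixes f g :: "nat \<Rightarrow> int"
  assumes "i \<in> A" "finite A" "\<forall>j\<in>A. j \<noteq> i \<longrightarrow> g j = f j"
  shows "sum g A = sum f A - f i + g i"
proof -
  have "sum g A = g i + sum g (A - {i})" using assms by (simp add: sum.remove)
  moreover have "sum f A = f i + sum f (A - {i})" using assms by (simp add: sum.remove)
  moreover have "sum g (A - {i}) = sum f (A - {i})" using assms(3) by (intro sum.cong) auto
  ultimately show ?thesis by simp
qed

lemma step_toward: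
  assumes "x \<in> Zd d" "y \<in> Zd d" "i < d" "x i \<noteq> y i"
  defines "x' \<equiv> x(i := x i + (if y i > x i then 1 else -1))"
  shows "x' \<in> Zd d" "adj d x x'" "norm1 d (\<lambda>j. x' j - y j) = norm1 d (\<lambda>j. x j - y j) - 1"
    "\<forall>j. min (x j) (y j) \<le> x' j \<and> x' j \<le> max (x j) (y j)"
    "\<forall>j. min (x' j) (y j) \<ge> min (x j) (y j) \<and> max (x' j) (y j) \<le> max (x j) (y j)"
proof -
  show "x' \<in> Zd d" using assms unfolding Zd_def x'_def by auto
  have "(\<Sum>j<d. \<bar>x j - x' j\<bar>) = (\<Sum>j<d. \<bar>0::int\<bar>) - \<bar>0\<bar> + \<bar>x i - x' i\<bar>"
    by (rule sum_upd[where i=i]) (use assms in \<open>auto simp: x'_def\<close>)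
  then have "norm1 d (\<lambda>j. x j - x' j) = 1" by (simp add: norm1_def x'_def)
  then show "adj d x x'" using \<open>x' \<in> Zd d\<close> assms(1) unfolding adj_def by simp
  show "norm1 d (\<lambda>j. x' j - y j) = norm1 d (\<lambda>j. x j - y j) - 1"
    unfolding norm1_def
    by (subst sum_upd[where i=i and f="\<lambda>j. \<bar>x j - y j\<bar>"]) (use assms in \<open>auto simp: x'_def\<close>)
  show "\<forall>j. min (x j) (y j) \<le> x' j \<and> x' j \<le> max (x j) (y j)"
    using assms by (auto simp: x'_def)
  show "\<forall>j. min (x' j) (y j) \<ge> min (x j) (y j) \<and> max (x' j) (y j) \<le> max (x j) (y j)"
    using assms by (auto simp: x'_def)
qed

lemma between_path_aux:
  "\<And>x. x \<in> Zd d \<Longrightarrow> y \<in> Zd d \<Longrightarrow> nat (norm1 d (\<lambda>i. x i - y i)) = k \<Longrightarrow>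
   \<exists>p. p \<noteq> [] \<and> hd p = x \<and> last p = y \<and> length p = k + 1 \<and> successively (adj d) p \<and>
     (\<forall>z\<in>set p. z \<in> Zd d \<and> (\<forall>i. min (x i) (y i) \<le> z i \<and> z i \<le> max (x i) (y i)))"
proof (induction k)
  case 0
  then have "norm1 d (\<lambda>i. x i - y i) = 0" using norm1_nonneg[of d "\<lambda>i. x i - y i"] by linarith
  then have "x = y" using norm1_zero_eq 0 by blast
  then show ?case using 0 by (intro exI[of _ "[x]"]) auto
next
  case (Suc k)
  then have pos: "norm1 d (\<lambda>i. x i - y i) > 0" by linarith
  have "\<exists>i<d. x i \<noteq> y i"
  proof (rule ccontr)
    assume "\<not> ?thesis"
    then have "norm1 d (\<lambda>i. x i - y i) = 0" unfolding norm1_def by simp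
    then show False using pos by simp
  qed
  then obtain i where i: "i < d" "x i \<noteq> y i" by blast
  define x' where "x' \<equiv> x(i := x i + (if y i > x i then 1 else -1))"
  note st = step_toward[OF Suc.prems(1,2) i, folded x'_def]
  have "nat (norm1 d (\<lambda>i. x' i - y i)) = k" using st(3) Suc.prems(3) pos by linarith
  then obtain p where p: "p \<noteq> []" "hd p = x'" "last p = y" "length p = k + 1"
     "successively (adj d) p"
     "\<forall>z\<in>set p. z \<in> Zd d \<and> (\<forall>i. min (x' i) (y i) \<le> z i \<and> z i \<le> max (x' i) (y i))"
    using Suc.IH[OF st(1) Suc.prems(2)] by blast
  show ?case
  proof (intro exI[of _ "x # p"] conjI)
    show "successively (adj d) (x # p)" using p st(2) by (cases p) auto
    show "\<forall>z\<in>set (x # p). z \<in> Zd d \<and> (\<forall>i. min (x i) (y i) \<le> z i \<and> z i \<le> max (x i) (y i))"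
    proof
      fix z assume "z \<in> set (x # p)"
      then consider "z = x" | "z \<in> set p" by auto
      then show "z \<in> Zd d \<and> (\<forall>i. min (x i) (y i) \<le> z i \<and> z i \<le> max (x i) (y i))"
      proof cases
        case 1 then show ?thesis using Suc.prems by auto
      next
        case 2
        then show ?thesis using p(6) st(5) by (meson order_trans)
      qed
    qed
  qed (use p in auto)
qed

lemma between_path:
  assumes "x \<in> Zd d" "y \<in> Zd d"
  shows "\<exists>p. is_path_in d {z \<in> Zd d. \<forall>i. min (x i) (y i) \<le> z i \<and> z i \<le> max (x i) (y i)} x y p
     \<and> int (length p) = norm1 d (\<lambda>i. x i - y i) + 1"
proof -
  obtain p where p: "p \<noteq> []" "hd p = x" "last p = y"
     "length p = nat (norm1 d (\<lambda>i. x i - y i)) + 1" "successively (adj d) p"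
     "\<forall>z\<in>set p. z \<in> Zd d \<and> (\<forall>i. min (x i) (y i) \<le> z i \<and> z i \<le> max (x i) (y i))"
    using between_path_aux[OF assms refl] by blast
  show ?thesis
    apply (rule exI[of _ p])
    using p norm1_nonneg[of d "\<lambda>i. x i - y i"] unfolding is_path_in_def succ_nth by auto
qed

definition sside :: "nat \<Rightarrow> pt \<Rightarrow> int" where
  "sside d v = (\<Sum>i\<in>{1..<d}. \<bar>v i\<bar>)"

lemma sside_nonneg: "sside d v \<ge> 0"
  unfolding sside_def by (simp add: sum_nonneg)

lemma lessThan_split0: "(d::nat) \<ge> 1 \<Longrightarrow> {..<d} = insert 0 {1..<d}"
  by force

lemma sum_split0: "d \<ge> 1 \<Longrightarrow> (\<Sum>i<d. f i) = f 0 + (\<Sum>i\<in>{1..<d}. f i)" for f :: "nat \<Rightarrow> int"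
  by (simp add: lessThan_split0)

lemma norm1_split: "d \<ge> 1 \<Longrightarrow> norm1 d v = \<bar>v 0\<bar> + sside d v"
  unfolding norm1_def sside_def by (rule sum_split0)

lemma norm1_2d:
  assumes "d \<ge> 1" "norm1 d (\<lambda>i. u i - w i) = 1"
  shows "\<bar>u 0 - w 0\<bar> + \<bar>sside d u - sside d w\<bar> \<le> 1"
proof -
  have "\<bar>sside d u - sside d w\<bar> = \<bar>\<Sum>i\<in>{1..<d}. \<bar>u i\<bar> - \<bar>w i\<bar>\<bar>"
    unfolding sside_def by (simp add: sum_subtractf)
  also have "\<dots> \<le> (\<Sum>i\<in>{1..<d}. \<bar>\<bar>u i\<bar> - \<bar>w i\<bar>\<bar>)" by (rule sum_abs)
  also have "\<dots> \<le> (\<Sum>i\<in>{1..<d}. \<bar>u i - w i\<bar>)" by (intro sum_mono abs_triangle_ineq3)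
  finally have "\<bar>sside d u - sside d w\<bar> \<le> (\<Sum>i\<in>{1..<d}. \<bar>u i - w i\<bar>)" .
  moreover have "norm1 d (\<lambda>i. u i - w i) = \<bar>u 0 - w 0\<bar> + (\<Sum>i\<in>{1..<d}. \<bar>u i - w i\<bar>)"
    unfolding norm1_def using sum_split0[OF assms(1)] by simp
  ultimately show ?thesis using assms(2) by linarith
qed

lemma adj_2d: "d \<ge> 1 \<Longrightarrow> adj d u w \<Longrightarrow> \<bar>u 0 - w 0\<bar> + \<bar>sside d u - sside d w\<bar> \<le> 1"
  unfolding adj_def using norm1_2d by blast

lemma Rbox_iff: "x \<in> Rbox d m1 m2 m3 \<longleftrightarrow> x \<in> Zd d \<and> - m1 \<le> x 0 \<and> x 0 \<le> m2 \<and> sside d x \<le> m3"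
  unfolding Rbox_def sside_def by simp

lemma Rhat_char:
  assumes "x \<in> Rhat d m1 m2 m3" "d \<ge> 1"
  shows "x \<in> Zd d \<and> - m1 \<le> x 0 \<and> x 0 \<le> m2 \<and> sside d x \<le> m3 \<and> (x 0 = - m1 \<or> x 0 = m2 \<or> sside d x = m3)"
proof -
  have xr: "x \<in> Rbox d m1 m2 m3" using assms unfolding Rhat_def by auto
  obtain y where y: "y \<in> Zd d" "y \<notin> Rbox d m1 m2 m3" "norm1 d (\<lambda>i. x i - y i) = 1"
    using assms unfolding Rhat_def by auto
  have 2: "\<bar>x 0 - y 0\<bar> + \<bar>sside d x - sside d y\<bar> \<le> 1" using norm1_2d[OF assms(2) y(3)] .
  have "x 0 = - m1 \<or> x 0 = m2 \<or> sside d x = m3"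
  proof (rule ccontr)
    assume "\<not> ?thesis"
    then have "y \<in> Rbox d m1 m2 m3" using 2 xr y(1) unfolding Rbox_iff by auto
    then show False using y(2) by simp
  qed
  then show ?thesis using xr unfolding Rbox_iff by auto
qed

lemma Lseg_char:
  assumes "x \<in> Lseg n m1" "d \<ge> 1"
  shows "x \<in> Zd d \<and> - n \<le> x 0 \<and> x 0 \<le> - m1 \<and> sside d x = 0"
proof -
  obtain k where k: "x = (\<lambda>i. k * unitv 0 i)" "- n \<le> k" "k \<le> - m1"
    using assms unfolding Lseg_def by auto
  have "sside d x = 0" unfolding sside_def k(1) unitv_def by simp
  moreover have "x \<in> Zd d" using assms(2) unfolding Zd_def k(1) unitv_def by auto
  ultimately show ?thesis using k by (simp add: unitv_def)
qed

definition F2 :: "int \<Rightarrow> int \<Rightarrow> int \<Rightarrow> int \<Rightarrow> int \<Rightarrow> bool" where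
  "F2 m1 m2 m3 t s \<longleftrightarrow> (- m1 \<le> t \<and> t \<le> m2 \<and> 0 \<le> s \<and> s \<le> m3 \<and> (t = - m1 \<or> t = m2 \<or> s = m3))
      \<or> (s = 0 \<and> t \<le> - m1)"

lemma fast_F2:
  assumes "x \<in> Rhat d m1 m2 m3 \<union> Lseg n m1" "d \<ge> 1"
  shows "F2 m1 m2 m3 (x 0) (sside d x)"
  using assms Rhat_char[of x d m1 m2 m3] Lseg_char[of x n m1 d] sside_nonneg[of d x]
  unfolding F2_def by auto

lemma F2_classify:
  fixes t1 s1 t2 s2 m1 m2 m3 :: int
  assumes "m1 \<ge> 1" "m2 \<ge> 1" "m3 \<ge> 1" "F2 m1 m2 m3 t1 s1" "F2 m1 m2 m3 t2 s2"
    "\<bar>t1 - t2\<bar> + \<bar>s1 - s2\<bar> \<le> 1" "s1 \<ge> 0" "s2 \<ge> 0"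
  shows "(t1 = t2 \<and> s1 = s2)
    \<or> (t1 = t2 \<and> \<bar>s1 - s2\<bar> = 1 \<and> (t1 = - m1 \<or> t1 = m2) \<and> s1 \<le> m3 \<and> s2 \<le> m3)
    \<or> (s1 = s2 \<and> \<bar>t1 - t2\<bar> = 1 \<and> s1 = m3 \<and> - m1 \<le> t1 \<and> t1 \<le> m2 \<and> - m1 \<le> t2 \<and> t2 \<le> m2)
    \<or> (s1 = s2 \<and> \<bar>t1 - t2\<bar> = 1 \<and> s1 = 0 \<and> t1 \<le> - m1 \<and> t2 \<le> - m1)"
proof -
  have "(t1 = t2 \<and> s1 = s2) \<or> (t1 = t2 \<and> s1 = s2 + 1) \<or> (t1 = t2 \<and> s2 = s1 + 1)
     \<or> (s1 = s2 \<and> t1 = t2 + 1) \<or> (s1 = s2 \<and> t2 = t1 + 1)" using assms(6) by (simp add: abs_if split: if_splits; linarith)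
  then show ?thesis
  proof (elim disjE conjE)
    assume "t1 = t2" "s1 = s2 + 1"
    then show ?thesis using assms(1-5) unfolding F2_def by auto
  next
    assume "t1 = t2" "s2 = s1 + 1"
    then show ?thesis using assms(1-5) unfolding F2_def by auto
  next
    assume "s1 = s2" "t1 = t2 + 1"
    then show ?thesis using assms(1-5) unfolding F2_def by auto
  next
    assume "s1 = s2" "t2 = t1 + 1"
    then show ?thesis using assms(1-5) unfolding F2_def by auto
  qed simp
qed

lemma mdiff: "0 \<le> k \<Longrightarrow> x1 - x2 \<le> r \<Longrightarrow> k*x1 - k*x2 \<le> k*(r::real)"
  by (metis mult_left_mono right_diff_distrib)

lemma min_diff: "min a1 b1 - min a2 b2 \<le> max (a1 - a2) (b1 - (b2::real))"
  by (simp add: min_def max_def)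

definition "Phi1 c b K t s = c*(\<bar>t\<bar> + s) + (b - c)*min s (max 0 (\<bar>t\<bar> + s - K))"
definition "Phi2 b M2 t s = b * max 0 (t - M2)"
definition "f0 b t s = b*(\<bar>t\<bar> + s)"
definition "fF b c M2 t s = b*M2 + c*s + b*\<bar>t - M2\<bar>"
definition "fL b c M1 M2 M3 t s = c*(M2 + 2*M3 - t) + b*M2 + min (c*s) ((b - c)*max 0 (- M1 - t) - c*s)"
definition "Phi3 b c M1 M2 M3 t s = min (f0 b t s) (min (fF b c M2 t s) (fL b c M1 M2 M3 t s))"

lemma V1_1:
  fixes b c K t1 s1 t2 s2 :: real
  assumes "0 \<le> c" "c \<le> b" "\<bar>t1 - t2\<bar> + \<bar>s1 - s2\<bar> \<le> 1"
  shows "Phi1 c b K t1 s1 - Phi1 c b K t2 s2 \<le> b"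
proof -
  have "c*(\<bar>t1\<bar> + s1) - c*(\<bar>t2\<bar> + s2) \<le> c*1"
    using assms by (intro mdiff) auto
  moreover have "(b - c)*min s1 (max 0 (\<bar>t1\<bar> + s1 - K)) - (b - c)*min s2 (max 0 (\<bar>t2\<bar> + s2 - K)) \<le> (b - c)*1"
    using assms by (intro mdiff) (auto simp: min_def max_def abs_if split: if_splits)
  ultimately show ?thesis unfolding Phi1_def by simp
qed

lemma V2_1:
  fixes b c K t1 s1 t2 s2 :: real
  assumes "0 \<le> c" "c \<le> b" "\<bar>t1 - t2\<bar> + \<bar>s1 - s2\<bar> \<le> 1"
    and "s1 = 0 \<or> \<bar>t1\<bar> + s1 \<le> K" "s2 = 0 \<or> \<bar>t2\<bar> + s2 \<le> K" "s1 \<ge> 0" "s2 \<ge> 0"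
  shows "Phi1 c b K t1 s1 - Phi1 c b K t2 s2 \<le> c"
proof -
  have "c*(\<bar>t1\<bar> + s1) - c*(\<bar>t2\<bar> + s2) \<le> c*1"
    using assms by (intro mdiff) auto
  moreover have "min s1 (max 0 (\<bar>t1\<bar> + s1 - K)) = 0" "min s2 (max 0 (\<bar>t2\<bar> + s2 - K)) = 0"
    using assms by auto
  ultimately show ?thesis unfolding Phi1_def by simp
qed

lemma V1_2:
  fixes b M2 t1 s1 t2 s2 :: real
  assumes "0 \<le> b" "\<bar>t1 - t2\<bar> + \<bar>s1 - s2\<bar> \<le> 1"
  shows "Phi2 b M2 t1 s1 - Phi2 b M2 t2 s2 \<le> b"
proof -
  have "b * max 0 (t1 - M2) - b * max 0 (t2 - M2) \<le> b*1"
    using assms by (intro mdiff) (auto simp: max_def)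
  then show ?thesis unfolding Phi2_def by simp
qed

lemma V2_2:
  fixes b M2 t1 s1 t2 s2 :: real
  assumes "0 \<le> c" "t1 \<le> M2" "t2 \<le> M2"
  shows "Phi2 b M2 t1 s1 - Phi2 b M2 t2 s2 \<le> c"
  using assms unfolding Phi2_def by simp

lemma V1_3:
  fixes b c M1 M2 M3 t1 s1 t2 s2 :: real
  assumes "0 \<le> c" "c \<le> b" "\<bar>t1 - t2\<bar> + \<bar>s1 - s2\<bar> \<le> 1"
  shows "Phi3 b c M1 M2 M3 t1 s1 - Phi3 b c M1 M2 M3 t2 s2 \<le> b"
proof -
  define dt where "dt = \<bar>t1 - t2\<bar>"
  define ds where "ds = \<bar>s1 - s2\<bar>"
  have dd: "dt + ds \<le> 1" "dt \<ge> 0" "ds \<ge> 0" using assms by (auto simp: dt_def ds_def)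
  have bb: "b*dt + b*ds \<le> b"
    using mult_left_mono[OF dd(1), of b] assms by (simp add: distrib_left)
  have cds: "c*ds \<le> b*ds" using assms dd by (intro mult_right_mono) auto
  have a0: "f0 b t1 s1 - f0 b t2 s2 \<le> b"
  proof -
    have "b*(\<bar>t1\<bar> + s1) - b*(\<bar>t2\<bar> + s2) \<le> b*1" using assms by (intro mdiff) auto
    then show ?thesis unfolding f0_def by simp
  qed
  have aF: "fF b c M2 t1 s1 - fF b c M2 t2 s2 \<le> b"
  proof -
    have "c*s1 - c*s2 \<le> c*ds" using assms by (intro mdiff) (auto simp: ds_def)
    moreover have "b*\<bar>t1 - M2\<bar> - b*\<bar>t2 - M2\<bar> \<le> b*dt" using assms by (intro mdiff) (auto simp: dt_def)
    ultimately show ?thesis unfolding fF_def using bb cds by linarith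
  qed
  have aL: "fL b c M1 M2 M3 t1 s1 - fL b c M1 M2 M3 t2 s2 \<le> b"
  proof -
    have 1: "c*(M2 + 2*M3 - t1) - c*(M2 + 2*M3 - t2) \<le> c*dt" using assms by (intro mdiff) (auto simp: dt_def)
    have 2: "c*s1 - c*s2 \<le> c*ds" using assms by (intro mdiff) (auto simp: ds_def)
    have 3: "(b - c)*max 0 (- M1 - t1) - (b - c)*max 0 (- M1 - t2) \<le> (b - c)*dt"
      using assms by (intro mdiff) (auto simp: dt_def max_def)
    have 4: "c*s2 - c*s1 \<le> c*ds" using assms by (intro mdiff) (auto simp: ds_def)
    have 5: "c*ds \<ge> 0" using assms dd by simp
    have 6: "(b - c)*dt \<ge> 0" using assms dd by simp
    have "min (c*s1) ((b - c)*max 0 (- M1 - t1) - c*s1) - min (c*s2) ((b - c)*max 0 (- M1 - t2) - c*s2)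
       \<le> (b - c)*dt + c*ds"
      using min_diff[of "c*s1" "(b - c)*max 0 (- M1 - t1) - c*s1" "c*s2" "(b - c)*max 0 (- M1 - t2) - c*s2"]
        2 3 4 5 6 by linarith
    moreover have "c*dt + (b - c)*dt = b*dt" by (simp add: algebra_simps; linarith)
    ultimately show ?thesis unfolding fL_def using 1 bb cds by linarith
  qed
  show ?thesis unfolding Phi3_def
    using min_diff[of "f0 b t1 s1" "min (fF b c M2 t1 s1) (fL b c M1 M2 M3 t1 s1)" "f0 b t2 s2"
        "min (fF b c M2 t2 s2) (fL b c M1 M2 M3 t2 s2)"]
      min_diff[of "fF b c M2 t1 s1" "fL b c M1 M2 M3 t1 s1" "fF b c M2 t2 s2" "fL b c M1 M2 M3 t2 s2"]
      a0 aF aL by linarith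
qed

lemma V2_3s:
  fixes b c M1 M2 M3 t s1 s2 :: real
  assumes "0 \<le> c" "c \<le> b" "\<bar>s1 - s2\<bar> \<le> 1" "0 \<le> M1" "0 \<le> M2" "0 \<le> M3"
    "t = - M1 \<or> t = M2" "0 \<le> s1" "0 \<le> s2"
    and K1: "c*(M1 + M2 + 2*M3) + b*M2 \<le> b*M1"
  shows "Phi3 b c M1 M2 M3 t s1 - Phi3 b c M1 M2 M3 t s2 \<le> c"
proof -
  have cs: "c*s1 \<le> b*s1" "c*s2 \<le> b*s2" using assms by (auto intro: mult_right_mono)
  have eq: "Phi3 b c M1 M2 M3 t s = min (fF b c M2 t s) (fL b c M1 M2 M3 t s)" if "s \<ge> 0" "c*s \<le> b*s" for s
  proof -
    have "min (fF b c M2 t s) (fL b c M1 M2 M3 t s) \<le> f0 b t s"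
      using assms(7)
    proof
      assume "t = - M1"
      have cs0: "c*s \<ge> 0" using assms that by simp
      have "max 0 (- M1 - t) = 0" using \<open>t = - M1\<close> by simp
      then have "min (c*s) ((b - c)*max 0 (- M1 - t) - c*s) = - (c*s)"
        using cs0 by (simp add: min_def)
      then have "fL b c M1 M2 M3 t s = c*(M2 + 2*M3 + M1) + b*M2 - c*s"
        unfolding fL_def using \<open>t = - M1\<close> by (simp add: algebra_simps; linarith)
      moreover have "f0 b t s = b*M1 + b*s" using \<open>t = - M1\<close> assms unfolding f0_def by (simp add: algebra_simps; linarith)
      moreover have "c*s \<ge> 0" "b*s \<ge> 0" using assms that by auto
      ultimately show ?thesis using K1 by (simp add: algebra_simps; linarith)
    next
      assume "t = M2"
      then have "fF b c M2 t s = b*M2 + c*s" unfolding fF_def by simp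
      moreover have "f0 b t s = b*M2 + b*s" using \<open>t = M2\<close> assms unfolding f0_def by (simp add: algebra_simps; linarith)
      ultimately show ?thesis using that by simp
    qed
    then show ?thesis unfolding Phi3_def by simp
  qed
  have dF: "fF b c M2 t s1 - fF b c M2 t s2 \<le> c"
  proof -
    have "c*s1 - c*s2 \<le> c*1" using assms by (intro mdiff) auto
    then show ?thesis unfolding fF_def by simp
  qed
  have dL: "fL b c M1 M2 M3 t s1 - fL b c M1 M2 M3 t s2 \<le> c"
  proof -
    have 2: "c*s1 - c*s2 \<le> c*1" using assms by (intro mdiff) auto
    have 4: "c*s2 - c*s1 \<le> c*1" using assms by (intro mdiff) auto
    have "min (c*s1) ((b - c)*max 0 (- M1 - t) - c*s1) - min (c*s2) ((b - c)*max 0 (- M1 - t) - c*s2) \<le> c"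
      using min_diff[of "c*s1" "(b - c)*max 0 (- M1 - t) - c*s1" "c*s2" "(b - c)*max 0 (- M1 - t) - c*s2"]
        2 4 by linarith
    then show ?thesis unfolding fL_def by simp
  qed
  show ?thesis using eq[OF assms(8) cs(1)] eq[OF assms(9) cs(2)] dF dL
      min_diff[of "fF b c M2 t s1" "fL b c M1 M2 M3 t s1" "fF b c M2 t s2" "fL b c M1 M2 M3 t s2"]
    by linarith
qed

lemma V2_3lat:
  fixes b c M1 M2 M3 t1 t2 :: real
  assumes "0 \<le> c" "c \<le> b" "\<bar>t1 - t2\<bar> \<le> 1" "0 \<le> M1" "0 \<le> M2" "0 \<le> M3"
    "- M1 \<le> t1" "t1 \<le> M2" "- M1 \<le> t2" "t2 \<le> M2"
    and K2: "c*(M2 + M3) + b*M2 \<le> b*M3"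
  shows "Phi3 b c M1 M2 M3 t1 M3 - Phi3 b c M1 M2 M3 t2 M3 \<le> c"
proof -
  have eq: "Phi3 b c M1 M2 M3 t M3 = c*(M2 + 2*M3 - t) + b*M2 - c*M3" if "- M1 \<le> t" "t \<le> M2" for t
  proof -
    have cs0: "c*M3 \<ge> 0" using assms that by simp
    have "max 0 (- M1 - t) = 0" using that by simp
    then have "min (c*M3) ((b - c)*max 0 (- M1 - t) - c*M3) = - (c*M3)"
      using cs0 by (simp add: min_def)
    then have L: "fL b c M1 M2 M3 t M3 = c*(M2 + 2*M3 - t) + b*M2 - c*M3"
      unfolding fL_def by simp
    have "c*(M2 - t) \<le> b*(M2 - t)" using assms that by (intro mult_right_mono) auto
    then have LF: "fL b c M1 M2 M3 t M3 \<le> fF b c M2 t M3"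
      unfolding L fF_def using that by (simp add: algebra_simps abs_if)
    have "c*(- t) \<le> c*\<bar>t\<bar>" using assms by (intro mult_left_mono) auto
    also have "\<dots> \<le> b*\<bar>t\<bar>" using assms by (intro mult_right_mono) auto
    finally have "c*(- t) \<le> b*\<bar>t\<bar>" .
    then have L0: "fL b c M1 M2 M3 t M3 \<le> f0 b t M3"
      unfolding L f0_def using K2 by (simp add: algebra_simps; linarith)
    show ?thesis unfolding Phi3_def using L LF L0 by simp
  qed
  have "c*(M2 + 2*M3 - t1) - c*(M2 + 2*M3 - t2) \<le> c*1" using assms by (intro mdiff) auto
  then show ?thesis using eq[OF assms(7,8)] eq[OF assms(9,10)] by simp
qed

lemma V2_3L:
  fixes b c M1 M2 M3 t1 t2 :: real
  assumes "0 \<le> c" "c \<le> b" "\<bar>t1 - t2\<bar> \<le> 1" "0 \<le> M1" "0 \<le> M2" "0 \<le> M3"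
    "t1 \<le> - M1" "t2 \<le> - M1"
    and K1: "c*(M1 + M2 + 2*M3) + b*M2 \<le> b*M1"
  shows "Phi3 b c M1 M2 M3 t1 0 - Phi3 b c M1 M2 M3 t2 0 \<le> c"
proof -
  have eq: "Phi3 b c M1 M2 M3 t 0 = c*(M2 + 2*M3 - t) + b*M2" if "t \<le> - M1" for t
  proof -
    have L: "fL b c M1 M2 M3 t 0 = c*(M2 + 2*M3 - t) + b*M2"
      unfolding fL_def using assms that by (simp add: min_def)
    have "(b - c)*M1 \<le> (b - c)*(- t)" using assms that by (intro mult_left_mono) auto
    then have e: "b*M1 - c*M1 \<le> c*t - b*t" by (simp add: algebra_simps; linarith)
    have ab: "\<bar>t\<bar> = - t" using that assms by simp
    have K1': "c*M1 + c*M2 + 2*(c*M3) + b*M2 \<le> b*M1" using K1 by (simp add: algebra_simps; linarith)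
    have L0: "fL b c M1 M2 M3 t 0 \<le> f0 b t 0"
      unfolding L f0_def ab using e K1' by (simp add: algebra_simps; linarith)
    have ab2: "\<bar>t - M2\<bar> = M2 - t" using that assms by simp
    have "b*M2 \<ge> 0" using assms by simp
    then have "f0 b t 0 \<le> fF b c M2 t 0" unfolding f0_def fF_def ab ab2
      by (simp add: algebra_simps; linarith)
    then show ?thesis unfolding Phi3_def using L L0 by simp
  qed
  have "c*(M2 + 2*M3 - t1) - c*(M2 + 2*M3 - t2) \<le> c*1" using assms by (intro mdiff) auto
  then show ?thesis using eq[OF assms(7)] eq[OF assms(8)] by simp
qed


lemma tgts:
  fixes a b c N M1 M2 M3 :: real
  assumes "0 < a" "a < b" "0 \<le> c" "c \<le> a" "1 \<le> M1" "1 \<le> M2" "1 \<le> M3"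
    and K1: "c*(M1 + M2 + 2*M3) + b*M2 \<le> b*M1" and KM: "(2*b + 3*a)*M1 \<le> (b - c)*N"
    and h: "2*M2 \<le> M3" "2*M3 \<le> M1" "2*M1 \<le> N"
  shows "\<And>t s. M1 \<le> s \<Longrightarrow> \<bar>t\<bar> + s = N \<Longrightarrow> c*(N + 2*M3) + b*M2 \<le> Phi1 c b (M1 + M3) t s"
    "\<And>t s. 0 \<le> s \<Longrightarrow> s \<le> M1 \<Longrightarrow> t = N - s \<Longrightarrow> c*(N + 2*M3) + b*M2 \<le> Phi2 b M2 t s"
    "\<And>t s. 0 \<le> s \<Longrightarrow> s \<le> M1 \<Longrightarrow> t = - (N - s) \<Longrightarrow> c*(N + 2*M3) + b*M2 \<le> Phi3 b c M1 M2 M3 t s"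
proof -
  have p1: "2*(b*M3) \<le> b*M1" "2*(b*M2) \<le> b*M3" "2*(a*M3) \<le> a*M1" "c*M3 \<le> a*M3"
    "c*M1 \<ge> 0" "c*M3 \<ge> 0" "c*M2 \<ge> 0" "c*M1 \<le> a*M1" "c*M2 \<le> a*M2" "2*(a*M2) \<le> a*M3" "b*M1 \<ge> 0" "b*M2 \<ge> 0" "b*M3 \<ge> 0" "a*M1 \<ge> 0" "a*M3 \<ge> 0"
    using assms mult_left_mono[OF h(1), of b] mult_left_mono[OF h(2), of b]
      mult_left_mono[OF h(2), of a] mult_left_mono[OF h(1), of a]
      mult_right_mono[of c a M3] mult_right_mono[of c a M1] mult_right_mono[of c a M2] by auto
  have K1': "c*M1 + c*M2 + 2*(c*M3) + b*M2 \<le> b*M1" using K1 by (simp add: algebra_simps; linarith)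
  have KM': "2*(b*M1) + 3*(a*M1) \<le> b*N - c*N" using KM by (simp add: algebra_simps; linarith)
  show "c*(N + 2*M3) + b*M2 \<le> Phi1 c b (M1 + M3) t s" if "M1 \<le> s" "\<bar>t\<bar> + s = N" for t s
  proof (cases "s \<le> N - M1 - M3")
    case True
    then have mn: "min s (max 0 (\<bar>t\<bar> + s - (M1 + M3))) = s" using that assms by auto
    have "(b - c)*M1 \<le> (b - c)*s" using that assms by (intro mult_left_mono) auto
    then show ?thesis unfolding Phi1_def mn using that K1' p1 by (simp add: algebra_simps; linarith)
  next
    case False
    then have mn: "min s (max 0 (\<bar>t\<bar> + s - (M1 + M3))) = N - M1 - M3" using that assms by auto
    have cN: "c*\<bar>t\<bar> + c*s = c*N" using that(2) by (metis distrib_left)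
    show ?thesis unfolding Phi1_def mn using KM' p1 cN by (simp add: algebra_simps; linarith)
  qed
  show "c*(N + 2*M3) + b*M2 \<le> Phi2 b M2 t s" if "0 \<le> s" "s \<le> M1" "t = N - s" for t s
  proof -
    have mx: "max 0 (t - M2) = N - s - M2" using that h assms by auto
    have "b*s \<le> b*M1" using that assms by (intro mult_left_mono) auto
    then show ?thesis unfolding Phi2_def mx using KM' p1 by (simp add: algebra_simps; linarith)
  qed
  show "c*(N + 2*M3) + b*M2 \<le> Phi3 b c M1 M2 M3 t s" if "0 \<le> s" "s \<le> M1" "t = - (N - s)" for t s
  proof -
    have bs: "b*s \<le> b*M1" "c*s \<le> c*M1" "c*s \<ge> 0" using that assms by (auto intro: mult_left_mono)
    have at: "\<bar>t\<bar> = N - s" using that h assms by auto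
    have a0: "c*(N + 2*M3) + b*M2 \<le> f0 b t s" unfolding f0_def at using KM' p1
      by (simp add: algebra_simps; linarith)
    have at2: "\<bar>t - M2\<bar> = N - s + M2" using that h assms by auto
    have aF: "c*(N + 2*M3) + b*M2 \<le> fF b c M2 t s" unfolding fF_def at2 using KM' p1 bs
      by (simp add: algebra_simps; linarith)
    have mx: "max 0 (- M1 - t) = N - s - M1" using that h assms by auto
    have "(b - c)*(N - 2*M1) \<le> (b - c)*(N - s - M1)" using that assms by (intro mult_left_mono) auto
    then have "b*N - 2*(b*M1) - c*N + 2*(c*M1) \<le> (b - c)*(N - s - M1)" by (simp add: algebra_simps; linarith)
    then have "c*s \<le> (b - c)*max 0 (- M1 - t) - c*s" unfolding mx using KM' p1 bs by linarith
    then have mn: "min (c*s) ((b - c)*max 0 (- M1 - t) - c*s) = c*s" by simp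
    have "c*(M2 + 2*M3 - t) + c*s = c*(N + 2*M3) + c*M2" unfolding that(3) by (simp add: algebra_simps)
    then have aL: "c*(N + 2*M3) + b*M2 \<le> fL b c M1 M2 M3 t s" unfolding fL_def mn using p1
      by linarith
    show ?thesis unfolding Phi3_def using a0 aF aL by simp
  qed
qed


lemma params:
  fixes a b c e N M1 M2 M3 :: real
  assumes "0 < a" "a < b" "0 \<le> c" "c \<le> a" "e < (b - a) / (2*b + 3*a)"
    "1 \<le> M1" "1 \<le> M2" "1 \<le> M3" "1 \<le> N"
    "M2 \<le> e*M3" "e*M3 \<le> e^2*M1" "e^2*M1 \<le> e^3*N"
  shows "c*(M1 + M2 + 2*M3) + b*M2 \<le> b*M1" "c*(M2 + M3) + b*M2 \<le> b*M3"
    "(2*b + 3*a)*M1 \<le> (b - c)*N" "2*M2 \<le> M3" "2*M3 \<le> M1" "2*M1 \<le> N"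
proof -
  have den: "2*b + 3*a > 0" using assms by simp
  have he: "e*(2*b + 3*a) < b - a" using assms(5) den by (simp add: pos_less_divide_eq)
  have epos: "e > 0"
  proof (rule ccontr)
    assume "\<not> e > 0"
    then have "e*M3 \<le> 0" using assms by (simp add: mult_nonpos_nonneg)
    then show False using assms by simp
  qed
  have ehalf: "e < 1/2"
  proof (rule ccontr)
    assume "\<not> e < 1/2"
    then have "(1/2)*(2*b + 3*a) \<le> e*(2*b + 3*a)" using den by (intro mult_right_mono) auto
    moreover have "(1/2)*(2*b + 3*a) = b + (3/2)*a" by (simp add: algebra_simps)
    ultimately show False using he assms(1,2) by linarith
  qed
  have m3: "M3 \<le> e*M1"
  proof -
    have "e*M3 \<le> e*(e*M1)" using assms(11) by (simp add: power2_eq_square mult.assoc)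
    then show ?thesis using epos by simp
  qed
  have m1: "M1 \<le> e*N"
  proof -
    have "e^2*M1 \<le> e^2*(e*N)" using assms(12) by (simp add: power3_eq_cube power2_eq_square mult.assoc)
    then show ?thesis using epos by simp
  qed
  have h2: "e*X \<le> X/2" if "X \<ge> 0" for X
  proof -
    have "e*X \<le> (1/2)*X" using ehalf that by (intro mult_right_mono) auto
    then show ?thesis by simp
  qed
  show "2*M2 \<le> M3" using h2[of M3] assms(8,10) by linarith
  show "2*M3 \<le> M1" using h2[of M1] m3 assms(6) by linarith
  show "2*M1 \<le> N" using h2[of N] m1 assms(9) by linarith
  have M2M3: "M2 \<le> M3" using h2[of M3] assms(8,10) by linarith
  have ba: "b - a \<le> b - c" using assms by simp
  show "c*(M2 + M3) + b*M2 \<le> b*M3"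
  proof -
    have "(b + c)*M2 \<le> (b + a)*M2" using assms by (intro mult_right_mono) auto
    also have "\<dots> \<le> (b + a)*(e*M3)" using assms by (intro mult_left_mono) auto
    also have "\<dots> = ((b + a)*e)*M3" by simp
    also have "\<dots> \<le> (b - a)*M3"
    proof (rule mult_right_mono)
      have "(b + a)*e \<le> (2*b + 3*a)*e" using assms epos by (intro mult_right_mono) auto
      then show "(b + a)*e \<le> b - a" using he by (simp add: mult.commute)
    qed (use assms in auto)
    also have "\<dots> \<le> (b - c)*M3" using ba assms by (intro mult_right_mono) auto
    finally show ?thesis by (simp add: algebra_simps)
  qed
  show "c*(M1 + M2 + 2*M3) + b*M2 \<le> b*M1"
  proof -
    have "c*(M2 + 2*M3) + b*M2 \<le> a*(M2 + 2*M3) + b*M2" using assms by (intro add_right_mono mult_right_mono) auto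
    also have "\<dots> \<le> a*(3*M3) + b*M3" using assms M2M3 by (intro add_mono mult_left_mono) auto
    also have "\<dots> = (3*a + b)*M3" by (simp add: algebra_simps)
    also have "\<dots> \<le> (3*a + b)*(e*M1)" using assms m3 by (intro mult_left_mono) auto
    also have "\<dots> = ((3*a + b)*e)*M1" by simp
    also have "\<dots> \<le> (b - a)*M1"
    proof (rule mult_right_mono)
      have "(3*a + b)*e \<le> (2*b + 3*a)*e" using assms epos by (intro mult_right_mono) auto
      then show "(3*a + b)*e \<le> b - a" using he by (simp add: mult.commute)
    qed (use assms in auto)
    also have "\<dots> \<le> (b - c)*M1" using ba assms by (intro mult_right_mono) auto
    finally show ?thesis by (simp add: algebra_simps)
  qed
  show "(2*b + 3*a)*M1 \<le> (b - c)*N"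
  proof -
    have "(2*b + 3*a)*M1 \<le> (2*b + 3*a)*(e*N)" using den m1 by (intro mult_left_mono) auto
    also have "\<dots> = (e*(2*b + 3*a))*N" by simp
    also have "\<dots> \<le> (b - a)*N" using he assms by (intro mult_right_mono) auto
    also have "\<dots> \<le> (b - c)*N" using ba assms by (intro mult_right_mono) auto
    finally show ?thesis .
  qed
qed



lemma sside_upd:
  assumes "i \<in> {1..<d}" "\<forall>j\<in>{1..<d}. j \<noteq> i \<longrightarrow> g j = f j"
  shows "sside d g = sside d f - \<bar>f i\<bar> + \<bar>g i\<bar>"
  unfolding sside_def by (rule sum_upd) (use assms in auto)

lemma sside_zero: "\<forall>j\<in>{1..<d}. f j = 0 \<Longrightarrow> sside d f = 0"
  unfolding sside_def by simp

lemma sside_cong: "\<forall>j\<in>{1..<d}. f j = g j \<Longrightarrow> sside d f = sside d g"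
  unfolding sside_def by simp

lemma Rhat_intro:
  assumes "d \<ge> 2" "z \<in> Zd d" "- m1 \<le> z 0" "z 0 \<le> m2" "sside d z \<le> m3"
    "z 0 = - m1 \<or> z 0 = m2 \<or> sside d z = m3"
  shows "z \<in> Rhat d m1 m2 m3"
proof -
  have d1: "d \<ge> 1" using assms by simp
  have zr: "z \<in> Rbox d m1 m2 m3" using assms unfolding Rbox_iff by simp
  have "\<exists>y \<in> Zd d - Rbox d m1 m2 m3. norm1 d (\<lambda>i. z i - y i) = 1"
  proof -
    consider "z 0 = - m1" | "z 0 = m2" | "sside d z = m3" using assms by blast
    then show ?thesis
    proof cases
      case 1
      define y where "y = z(0 := - m1 - 1)"
      have "y \<in> Zd d" using assms unfolding y_def Zd_def by auto
      moreover have "y \<notin> Rbox d m1 m2 m3" unfolding Rbox_iff y_def by simp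
      moreover have "norm1 d (\<lambda>i. z i - y i) = 1"
        unfolding norm1_split[OF d1] using sside_zero[of d "\<lambda>i. z i - y i"] 1 by (simp add: y_def)
      ultimately show ?thesis by blast
    next
      case 2
      define y where "y = z(0 := m2 + 1)"
      have "y \<in> Zd d" using assms unfolding y_def Zd_def by auto
      moreover have "y \<notin> Rbox d m1 m2 m3" unfolding Rbox_iff y_def by simp
      moreover have "norm1 d (\<lambda>i. z i - y i) = 1"
        unfolding norm1_split[OF d1] using sside_zero[of d "\<lambda>i. z i - y i"] 2 by (simp add: y_def)
      ultimately show ?thesis by blast
    next
      case 3
      define y where "y = z(1 := z 1 + (if z 1 \<ge> 0 then 1 else -1))"
      have i1: "(1::nat) \<in> {1..<d}" using assms by auto
      have y1: "\<bar>y 1\<bar> = \<bar>z 1\<bar> + 1" unfolding y_def by (simp add: abs_if)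
      have "y \<in> Zd d" using assms unfolding y_def Zd_def by auto
      moreover have "sside d y = sside d z - \<bar>z 1\<bar> + \<bar>y 1\<bar>"
        by (rule sside_upd[OF i1]) (simp add: y_def)
      then have "sside d y = m3 + 1" using 3 y1 by linarith
      then have "y \<notin> Rbox d m1 m2 m3" unfolding Rbox_iff by simp
      moreover have "sside d (\<lambda>i. z i - y i) = sside d (\<lambda>i. 0) - \<bar>0\<bar> + \<bar>z 1 - y 1\<bar>"
        by (rule sside_upd[OF i1]) (simp add: y_def)
      moreover have "\<bar>z 1 - y 1\<bar> = 1" unfolding y_def by (simp add: abs_if)
      moreover have "z 0 - y 0 = 0" unfolding y_def by simp
      ultimately have "norm1 d (\<lambda>i. z i - y i) = 1"
        unfolding norm1_split[OF d1] using sside_zero[of d "\<lambda>i. 0::int"] by simp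
      with \<open>y \<in> Zd d\<close> \<open>y \<notin> Rbox d m1 m2 m3\<close> show ?thesis by blast
    qed
  qed
  then show ?thesis using zr unfolding Rhat_def by blast
qed

lemma path_concat:
  assumes "is_path_in d A x y p" "is_path_in d A y z q"
  shows "is_path_in d A x z (p @ tl q) \<and> length (p @ tl q) = length p + length q - 1"
proof -
  have sp: "successively (adj d) p" and sq: "successively (adj d) q"
    using assms unfolding is_path_in_def succ_nth by auto
  have q: "q \<noteq> []" "hd q = y" "last q = z" "set q \<subseteq> A" using assms(2) unfolding is_path_in_def by auto
  have p: "p \<noteq> []" "hd p = x" "last p = y" "set p \<subseteq> A" using assms(1) unfolding is_path_in_def by auto
  have "successively (adj d) (p @ tl q)"
  proof (cases "tl q")
    case Nil then show ?thesis using sp by simp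
  next
    case (Cons u us)
    then have "q = y # u # us" using q by (metis list.collapse)
    then have "adj d y u" "successively (adj d) (u # us)" using sq by auto
    then show ?thesis using sp p Cons by (simp add: successively_append_iff)
  qed
  moreover have "last (p @ tl q) = z"
  proof (cases "tl q = []")
    case True
    then have "q = [y]" using q by (metis list.collapse)
    then show ?thesis using p q True by simp
  next
    case False
    then show ?thesis using q by (simp add: last_tl)
  qed
  moreover have "set (tl q) \<subseteq> set q" by (cases q) auto
  then have "set (p @ tl q) \<subseteq> A" using p q by auto
  moreover have "length (p @ tl q) = length p + length q - 1" using q by (cases q) auto
  ultimately show ?thesis using p unfolding is_path_in_def succ_nth by auto
qed

lemma path_mono: "is_path_in d A x y p \<Longrightarrow> A \<subseteq> B \<Longrightarrow> is_path_in d B x y p"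
  unfolding is_path_in_def by auto


lemma potential_lb:
  fixes \<Phi> :: "int \<Rightarrow> int \<Rightarrow> real"
  assumes d1: "d \<ge> 1" and E: "event_E d a b \<delta> n m1 m2 m3 \<tau>" and nn: "\<forall>e\<in>edges d. \<tau> e \<ge> 0"
    and c: "c \<le> max (a - \<delta>) 0" and m: "m1 \<ge> 1" "m2 \<ge> 1" "m3 \<ge> 1"
    and V1: "\<And>t1 s1 t2 s2. \<bar>t1 - t2\<bar> + \<bar>s1 - s2\<bar> \<le> 1 \<Longrightarrow> s1 \<ge> 0 \<Longrightarrow> s2 \<ge> 0 \<Longrightarrow> \<Phi> t1 s1 - \<Phi> t2 s2 \<le> b"
    and V2: "\<And>t1 s1 t2 s2.
      (t1 = t2 \<and> \<bar>s1 - s2\<bar> = 1 \<and> (t1 = - m1 \<or> t1 = m2) \<and> s1 \<le> m3 \<and> s2 \<le> m3 \<and> s1 \<ge> 0 \<and> s2 \<ge> 0)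
    \<or> (s1 = s2 \<and> \<bar>t1 - t2\<bar> = 1 \<and> s1 = m3 \<and> - m1 \<le> t1 \<and> t1 \<le> m2 \<and> - m1 \<le> t2 \<and> t2 \<le> m2)
    \<or> (s1 = s2 \<and> \<bar>t1 - t2\<bar> = 1 \<and> s1 = 0 \<and> t1 \<le> - m1 \<and> t2 \<le> - m1) \<Longrightarrow> \<Phi> t1 s1 - \<Phi> t2 s2 \<le> c"
    and P: "is_path_in d (Lambda d n) x y p"
  shows "\<Phi> (x 0) (sside d x) - \<Phi> (y 0) (sside d y) \<le> path_weight \<tau> p"
proof -
  have "\<forall>u w. u \<in> Lambda d n \<longrightarrow> w \<in> Lambda d n \<longrightarrow> adj d u w \<longrightarrow>
      \<Phi> (u 0) (sside d u) - \<Phi> (w 0) (sside d w) \<le> \<tau> {u, w}"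
  proof (intro allI impI)
    fix u w assume uL: "u \<in> Lambda d n" and wL: "w \<in> Lambda d n" and uw: "adj d u w"
    have two: "\<bar>u 0 - w 0\<bar> + \<bar>sside d u - sside d w\<bar> \<le> 1" using adj_2d[OF d1 uw] .
    have t0: "\<tau> {u, w} \<ge> 0" using nn adj_edge[OF uw] by blast
    have su: "sside d u \<ge> 0" "sside d w \<ge> 0" using sside_nonneg by auto
    show "\<Phi> (u 0) (sside d u) - \<Phi> (w 0) (sside d w) \<le> \<tau> {u, w}"
    proof (cases "u \<in> Rhat d m1 m2 m3 \<union> Lseg n m1 \<and> w \<in> Rhat d m1 m2 m3 \<union> Lseg n m1")
      case True
      then have ta: "a - \<delta> \<le> \<tau> {u, w}" using E uw unfolding event_E_def by blast
      then have tc: "c \<le> \<tau> {u, w}" using t0 c by linarith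
      have F: "F2 m1 m2 m3 (u 0) (sside d u)" "F2 m1 m2 m3 (w 0) (sside d w)"
        using True fast_F2[OF _ d1] by blast+
      from F2_classify[OF m F two su]
      consider "u 0 = w 0 \<and> sside d u = sside d w"
        | "(u 0 = w 0 \<and> \<bar>sside d u - sside d w\<bar> = 1 \<and> (u 0 = - m1 \<or> u 0 = m2) \<and> sside d u \<le> m3 \<and> sside d w \<le> m3)
    \<or> (sside d u = sside d w \<and> \<bar>u 0 - w 0\<bar> = 1 \<and> sside d u = m3 \<and> - m1 \<le> u 0 \<and> u 0 \<le> m2 \<and> - m1 \<le> w 0 \<and> w 0 \<le> m2)
    \<or> (sside d u = sside d w \<and> \<bar>u 0 - w 0\<bar> = 1 \<and> sside d u = 0 \<and> u 0 \<le> - m1 \<and> w 0 \<le> - m1)"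
        by blast
      then show ?thesis
      proof cases
        case 1 then show ?thesis using t0 by simp
      next
        case 2
        then have "\<Phi> (u 0) (sside d u) - \<Phi> (w 0) (sside d w) \<le> c" using su by (intro V2) blast
        then show ?thesis using tc by linarith
      qed
    next
      case False
      then have "b \<le> \<tau> {u, w}" using E uw uL wL unfolding event_E_def by blast
      moreover have "\<Phi> (u 0) (sside d u) - \<Phi> (w 0) (sside d w) \<le> b" using V1[OF two su] .
      ultimately show ?thesis by linarith
    qed
  qed
  then show ?thesis using path_lb[OF P, of "\<lambda>v. \<Phi> (v 0) (sside d v)" \<tau>] by simp
qed


lemma cast_step:
  fixes t1 s1 t2 s2 :: int
  assumes "\<bar>t1 - t2\<bar> + \<bar>s1 - s2\<bar> \<le> 1"
  shows "\<bar>real_of_int t1 - real_of_int t2\<bar> + \<bar>real_of_int s1 - real_of_int s2\<bar> \<le> 1"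
proof -
  have "real_of_int (\<bar>t1 - t2\<bar> + \<bar>s1 - s2\<bar>) \<le> real_of_int 1" using assms by (simp only: of_int_le_iff)
  then show ?thesis by simp
qed

lemma cast_le: "(a::int) \<le> b \<Longrightarrow> real_of_int a \<le> real_of_int b" by simp

lemma V1_int:
  fixes \<Phi> :: "real \<Rightarrow> real \<Rightarrow> real"
  assumes "\<And>T1 S1 T2 S2. \<bar>T1 - T2\<bar> + \<bar>S1 - S2\<bar> \<le> 1 \<Longrightarrow> S1 \<ge> 0 \<Longrightarrow> S2 \<ge> 0 \<Longrightarrow> \<Phi> T1 S1 - \<Phi> T2 S2 \<le> b"
    "\<bar>t1 - t2\<bar> + \<bar>s1 - s2\<bar> \<le> 1" "s1 \<ge> 0" "s2 \<ge> 0"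
  shows "\<Phi> (of_int t1) (of_int s1) - \<Phi> (of_int t2) (of_int s2) \<le> b"
  using assms(1)[OF cast_step[OF assms(2)]] assms(3,4) by simp


abbreviation (input) fastcase :: "int \<Rightarrow> int \<Rightarrow> int \<Rightarrow> int \<Rightarrow> int \<Rightarrow> int \<Rightarrow> int \<Rightarrow> bool" where
  "fastcase m1 m2 m3 t1 s1 t2 s2 \<equiv>
      (t1 = t2 \<and> \<bar>s1 - s2\<bar> = 1 \<and> (t1 = - m1 \<or> t1 = m2) \<and> s1 \<le> m3 \<and> s2 \<le> m3 \<and> s1 \<ge> 0 \<and> s2 \<ge> 0)
    \<or> (s1 = s2 \<and> \<bar>t1 - t2\<bar> = 1 \<and> s1 = m3 \<and> - m1 \<le> t1 \<and> t1 \<le> m2 \<and> - m1 \<le> t2 \<and> t2 \<le> m2)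
    \<or> (s1 = s2 \<and> \<bar>t1 - t2\<bar> = 1 \<and> s1 = 0 \<and> t1 \<le> - m1 \<and> t2 \<le> - m1)"

lemma cast_F1: "s = 0 \<or> \<bar>t\<bar> + s \<le> k \<Longrightarrow> real_of_int s = 0 \<or> \<bar>real_of_int t\<bar> + real_of_int s \<le> real_of_int k"
proof -
  assume "s = 0 \<or> \<bar>t\<bar> + s \<le> k"
  then show ?thesis
  proof
    assume "\<bar>t\<bar> + s \<le> k"
    then have "real_of_int (\<bar>t\<bar> + s) \<le> real_of_int k" by (simp only: of_int_le_iff)
    then show ?thesis by simp
  qed simp
qed

lemma V2_1_int:
  fixes b c :: real
  assumes "0 \<le> c" "c \<le> b" "m2 \<le> m1" "m1 \<ge> 1" "m2 \<ge> 1" "m3 \<ge> 1" "fastcase m1 m2 m3 t1 s1 t2 s2"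
  shows "Phi1 c b (of_int m1 + of_int m3) (of_int t1) (of_int s1) - Phi1 c b (of_int m1 + of_int m3) (of_int t2) (of_int s2) \<le> c"
proof -
  have st: "\<bar>t1 - t2\<bar> + \<bar>s1 - s2\<bar> \<le> 1" "s1 \<ge> 0" "s2 \<ge> 0"
    "s1 = 0 \<or> \<bar>t1\<bar> + s1 \<le> m1 + m3" "s2 = 0 \<or> \<bar>t2\<bar> + s2 \<le> m1 + m3"
    using assms(3-7) by auto
  show ?thesis
    using V2_1[OF assms(1,2) cast_step[OF st(1)]] cast_F1[OF st(4)] cast_F1[OF st(5)] st(2,3) by simp
qed

lemma V2_2_int:
  fixes b c :: real
  assumes "0 \<le> c" "m1 \<ge> 1" "m2 \<ge> 1" "fastcase m1 m2 m3 t1 s1 t2 s2"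
  shows "Phi2 b (of_int m2) (of_int t1) (of_int s1 :: real) - Phi2 b (of_int m2) (of_int t2) (of_int s2 :: real) \<le> c"
proof -
  have "t1 \<le> m2" "t2 \<le> m2" using assms by auto
  then have "real_of_int t1 \<le> real_of_int m2" "real_of_int t2 \<le> real_of_int m2" by simp_all
  then show ?thesis by (intro V2_2[OF assms(1)])
qed

lemma V2_3_int:
  fixes b c :: real
  assumes "0 \<le> c" "c \<le> b" "m1 \<ge> 1" "m2 \<ge> 1" "m3 \<ge> 1" "fastcase m1 m2 m3 t1 s1 t2 s2"
    and K1: "c*(of_int m1 + of_int m2 + 2*of_int m3) + b*of_int m2 \<le> b*of_int m1"
    and K2: "c*(of_int m2 + of_int m3) + b*of_int m2 \<le> b*of_int m3"
  shows "Phi3 b c (of_int m1) (of_int m2) (of_int m3) (of_int t1) (of_int s1)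
       - Phi3 b c (of_int m1) (of_int m2) (of_int m3) (of_int t2) (of_int s2) \<le> c"
proof -
  have M: "0 \<le> real_of_int m1" "0 \<le> real_of_int m2" "0 \<le> real_of_int m3" using assms by auto
  consider "t1 = t2" "\<bar>s1 - s2\<bar> = 1" "t1 = - m1 \<or> t1 = m2" "s1 \<le> m3" "s2 \<le> m3" "s1 \<ge> 0" "s2 \<ge> 0"
    | "s1 = s2" "\<bar>t1 - t2\<bar> = 1" "s1 = m3" "- m1 \<le> t1" "t1 \<le> m2" "- m1 \<le> t2" "t2 \<le> m2"
    | "s1 = s2" "\<bar>t1 - t2\<bar> = 1" "s1 = 0" "t1 \<le> - m1" "t2 \<le> - m1"
    using assms(6) by blast
  then show ?thesis
  proof cases
    case 1
    have "\<bar>t1 - t2\<bar> + \<bar>s1 - s2\<bar> \<le> 1" using 1 by simp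
    note cs = cast_step[OF this]
    have tt: "real_of_int t1 = - real_of_int m1 \<or> real_of_int t1 = real_of_int m2" using 1(3) by auto
    have ss: "\<bar>real_of_int s1 - real_of_int s2\<bar> \<le> 1" "0 \<le> real_of_int s1" "0 \<le> real_of_int s2"
      using cs 1 by auto
    show ?thesis unfolding \<open>t1 = t2\<close>[symmetric]
      by (rule V2_3s[OF assms(1,2) ss(1) M tt ss(2,3) K1])
  next
    case 2
    have "\<bar>t1 - t2\<bar> + \<bar>s1 - s2\<bar> \<le> 1" using 2 by simp
    note cs = cast_step[OF this]
    have tt: "\<bar>real_of_int t1 - real_of_int t2\<bar> \<le> 1" using cs 2 by simp
    have ee: "- real_of_int m1 \<le> real_of_int t1" "real_of_int t1 \<le> real_of_int m2"
       "- real_of_int m1 \<le> real_of_int t2" "real_of_int t2 \<le> real_of_int m2" using 2 by simp_all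
    have s2m: "s1 = m3" "s2 = m3" using 2 by auto
    show ?thesis unfolding s2m using V2_3lat[OF assms(1,2) tt M ee K2] .
  next
    case 3
    have "\<bar>t1 - t2\<bar> + \<bar>s1 - s2\<bar> \<le> 1" using 3 by simp
    note cs = cast_step[OF this]
    have tt: "\<bar>real_of_int t1 - real_of_int t2\<bar> \<le> 1" using cs 3 by simp
    have ee: "real_of_int t1 \<le> - real_of_int m1" "real_of_int t2 \<le> - real_of_int m1" using 3 by simp_all
    have s2m: "s1 = 0" "s2 = 0" using 3 by auto
    show ?thesis unfolding s2m using V2_3L[OF assms(1,2) tt M ee K1] by simp
  qed
qed


lemma part2:
  fixes d :: nat and a b \<epsilon> \<delta> :: real and n m1 m2 m3 :: int
    and \<tau> :: "pt set \<Rightarrow> real"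
  assumes "d \<ge> 2"
    and "\<forall>e \<in> edges d. \<tau> e \<ge> 0"
    and "0 < a" and "a < b"
    and "\<epsilon> < (b - a) / (2 * b + 3 * a)"
    and "n \<ge> 1" and "m1 \<ge> 1" and "m2 \<ge> 1" and "m3 \<ge> 1"
    and "1 \<le> m2" and "m2 \<le> \<epsilon> * m3" and "\<epsilon> * m3 \<le> \<epsilon>^2 * m1"
    and "\<epsilon>^2 * m1 \<le> \<epsilon>^3 * n"
    and "\<delta> > 0"
    and "event_E d a b \<delta> n m1 m2 m3 \<tau>"
    and x: "x \<in> Zd d" "norm1 d x = n"
  shows "passage_time d \<tau> (Lambda d n) x (\<lambda>i. 0) \<ge> (a - \<delta>) * (n + 2 * m3) + b * m2"
proof -
  have d1: "d \<ge> 1" using assms(1) by simp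
  define c where "c = max (a - \<delta>) 0"
  have c0: "0 \<le> c" "c \<le> a" "c \<le> b" using assms(3,4,14) unfolding c_def by auto
  have cle: "c \<le> max (a - \<delta>) 0" unfolding c_def by simp
  note P = params[of a b c \<epsilon> "of_int m1" "of_int m2" "of_int m3" "of_int n"]
  have K1: "c*(of_int m1 + of_int m2 + 2*of_int m3) + b*of_int m2 \<le> b*of_int m1"
    and K2: "c*(of_int m2 + of_int m3) + b*of_int m2 \<le> b*of_int m3"
    and KM: "(2*b + 3*a)*of_int m1 \<le> (b - c)*of_int n"
    and h: "2*real_of_int m2 \<le> of_int m3" "2*real_of_int m3 \<le> of_int m1" "2*real_of_int m1 \<le> of_int n"
    using P assms c0 by auto
  have "real_of_int m2 \<le> real_of_int m1" using h assms(9) by linarith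
  moreover have "real_of_int (2*m1) \<le> real_of_int n" using h by simp
  ultimately have hi: "m2 \<le> m1" "2*m1 \<le> n" by (simp_all only: of_int_le_iff)
  define T where "T = c*(of_int n + 2*of_int m3) + b*of_int m2"
  have "(a - \<delta>) * (of_int n + 2 * of_int m3) \<le> c * (of_int n + 2 * of_int m3)"
    using assms(6,9) unfolding c_def by (intro mult_right_mono) auto
  then have Tge: "(a - \<delta>) * (n + 2 * m3) + b * m2 \<le> T" unfolding T_def by simp
  have tx: "\<bar>x 0\<bar> + sside d x = n" using norm1_split[OF d1, of x] x by simp
  have sz: "sside d (\<lambda>i. 0) = 0" unfolding sside_def by simp
  note tg = tgts[OF assms(3,4) c0(1,2) _ _ _ K1 KM h]
  have lb: "T \<le> path_weight \<tau> p" if p: "is_path_in d (Lambda d n) x (\<lambda>i. 0) p" for p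
  proof -
    note plb = potential_lb[OF d1 assms(15,2) cle assms(7-9) _ _ p]
    consider "m1 \<le> sside d x" | "sside d x < m1" "x 0 > 0" | "sside d x < m1" "x 0 \<le> 0" by linarith
    then show ?thesis
    proof cases
      case 1
      let ?F = "\<lambda>t s. Phi1 c b (of_int m1 + of_int m3) (of_int t) (of_int s)"
      have v1: "?F t1 s1 - ?F t2 s2 \<le> b" if "\<bar>t1 - t2\<bar> + \<bar>s1 - s2\<bar> \<le> 1" for t1 s1 t2 s2
        using V1_1[OF c0(1,3) cast_step[OF that]] by simp
      have v2: "?F t1 s1 - ?F t2 s2 \<le> c" if "fastcase m1 m2 m3 t1 s1 t2 s2" for t1 s1 t2 s2
        using V2_1_int[OF c0(1,3) hi(1) assms(7-9) that] .
      have "?F (x 0) (sside d x) - ?F 0 0 \<le> path_weight \<tau> p"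
        using plb[of ?F, OF v1 v2] sz by simp
      moreover have "?F 0 0 = 0" unfolding Phi1_def using assms(7,9) by simp
      moreover have "T \<le> ?F (x 0) (sside d x)" unfolding T_def
      proof (rule tg(1))
        show "real_of_int m1 \<le> real_of_int (sside d x)" using 1 by simp
        show "\<bar>real_of_int (x 0)\<bar> + real_of_int (sside d x) = real_of_int n"
          using tx by (metis of_int_abs of_int_add)
      qed (use assms in auto)
      ultimately show ?thesis by linarith
    next
      case 2
      let ?F = "\<lambda>t s. Phi2 b (of_int m2) (of_int t) (of_int s :: real)"
      have v1: "?F t1 s1 - ?F t2 s2 \<le> b" if "\<bar>t1 - t2\<bar> + \<bar>s1 - s2\<bar> \<le> 1" for t1 s1 t2 s2
        using V1_2[OF _ cast_step[OF that]] c0 assms(3) by simp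
      have v2: "?F t1 s1 - ?F t2 s2 \<le> c" if "fastcase m1 m2 m3 t1 s1 t2 s2" for t1 s1 t2 s2
        using V2_2_int[OF c0(1) assms(7,8) that] .
      have "?F (x 0) (sside d x) - ?F 0 0 \<le> path_weight \<tau> p"
        using plb[of ?F, OF v1 v2] sz by simp
      moreover have "?F 0 0 = 0" unfolding Phi2_def using assms(8) by simp
      moreover have "T \<le> ?F (x 0) (sside d x)" unfolding T_def
      proof (rule tg(2))
        show "real_of_int (x 0) = real_of_int n - real_of_int (sside d x)"
          using tx 2 by simp
      qed (use 2 sside_nonneg[of d x] assms in auto)
      ultimately show ?thesis by linarith
    next
      case 3
      let ?F = "\<lambda>t s. Phi3 b c (of_int m1) (of_int m2) (of_int m3) (of_int t) (of_int s)"
      have v1: "?F t1 s1 - ?F t2 s2 \<le> b" if "\<bar>t1 - t2\<bar> + \<bar>s1 - s2\<bar> \<le> 1" for t1 s1 t2 s2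
        using V1_3[OF c0(1,3) cast_step[OF that]] by simp
      have v2: "?F t1 s1 - ?F t2 s2 \<le> c" if "fastcase m1 m2 m3 t1 s1 t2 s2" for t1 s1 t2 s2
        using V2_3_int[OF c0(1,3) assms(7-9) that K1 K2] .
      have "?F (x 0) (sside d x) - ?F 0 0 \<le> path_weight \<tau> p"
        using plb[of ?F, OF v1 v2] sz by simp
      moreover have "?F 0 0 \<le> 0" unfolding Phi3_def f0_def by simp
      moreover have "T \<le> ?F (x 0) (sside d x)" unfolding T_def
      proof (rule tg(3))
        show "real_of_int (x 0) = - (real_of_int n - real_of_int (sside d x))"
          using tx 3 by simp
      qed (use 3 sside_nonneg[of d x] assms in auto)
      ultimately show ?thesis by linarith
    qed
  qed
  have zZ: "(\<lambda>i. 0::int) \<in> Zd d" unfolding Zd_def by simp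
  obtain p0 where p0: "is_path_in d {z \<in> Zd d. \<forall>i. min (x i) 0 \<le> z i \<and> z i \<le> max (x i) 0} x (\<lambda>i. 0) p0"
    using between_path[OF x(1) zZ] by auto
  have sub: "{z \<in> Zd d. \<forall>i. min (x i) 0 \<le> z i \<and> z i \<le> max (x i) 0} \<subseteq> Lambda d n"
  proof
    fix z assume z: "z \<in> {z \<in> Zd d. \<forall>i. min (x i) 0 \<le> z i \<and> z i \<le> max (x i) 0}"
    have "norm1 d z \<le> norm1 d x" unfolding norm1_def
    proof (rule sum_mono)
      fix i
      have "min (x i) 0 \<le> z i \<and> z i \<le> max (x i) 0" using z by blast
      then show "\<bar>z i\<bar> \<le> \<bar>x i\<bar>" by (cases "x i \<le> 0") (auto simp: min_def max_def)
    qed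
    then show "z \<in> Lambda d n" using z x unfolding Lambda_def by auto
  qed
  have ne: "{path_weight \<tau> p | p. is_path_in d (Lambda d n) x (\<lambda>i. 0) p} \<noteq> {}"
    using path_mono[OF p0 sub] by blast
  have "T \<le> passage_time d \<tau> (Lambda d n) x (\<lambda>i. 0)"
    unfolding passage_time_def by (rule cInf_greatest[OF ne]) (use lb in blast)
  then show ?thesis using Tge by linarith
qed




lemma part1:
  fixes d :: nat and a b \<epsilon> \<delta> :: real and n m1 m2 m3 :: int
    and \<tau> :: "pt set \<Rightarrow> real"
  assumes "d \<ge> 2"
    and "\<forall>e \<in> edges d. \<tau> e \<ge> 0"
    and "0 < a" and "a < b"
    and "n \<ge> 1" and "m1 \<ge> 1" and "m2 \<ge> 1" and "m3 \<ge> 1"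
    and hm: "m2 \<le> m1" "m1 + m3 \<le> n"
    and "event_E d a b \<delta> n m1 m2 m3 \<tau>"
    and y: "y \<in> Rhat d m1 m2 m3"
  shows "passage_time d \<tau> (Lambda d n) (\<lambda>i. - n * unitv 0 i) y \<le> a * (n + 2 * m3) + a * m2"
proof -
  have d1: "d \<ge> 1" using assms(1) by simp
  have i1: "(1::nat) \<in> {1..<d}" using assms(1) by auto
  note yc = Rhat_char[OF y d1]
  define B where "B = Rhat d m1 m2 m3 \<union> Lseg n m1"
  define Btw where "Btw = (\<lambda>x y. {z \<in> Zd d. \<forall>i. min ((x::pt) i) (y i) \<le> z i \<and> z i \<le> max (x i) (y i)})"
  define sg :: int where "sg = (if y 1 \<ge> 0 then 1 else -1)"
  define k where "k = m3 - sside d y"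
  have k0: "k \<ge> 0" using yc unfolding k_def by simp
  define q0 :: pt where "q0 = (\<lambda>i. - n * unitv 0 i)"
  define q1 :: pt where "q1 = (\<lambda>i. - m1 * unitv 0 i)"
  define w1 :: pt where "w1 = (\<lambda>i. if i = 0 then - m1 else if i = 1 then y 1 + sg*k else y i)"
  define w2 :: pt where "w2 = w1(0 := y 0)"
  have Z: "q0 \<in> Zd d" "q1 \<in> Zd d" "w1 \<in> Zd d" "w2 \<in> Zd d"
    using yc assms(1) unfolding Zd_def q0_def q1_def w1_def w2_def unitv_def by auto
  have aw1: "\<bar>w1 1\<bar> = \<bar>y 1\<bar> + k" using k0 unfolding w1_def sg_def by (auto simp: abs_if)
  have sw1: "sside d w1 = m3"
  proof -
    have "sside d w1 = sside d y - \<bar>y 1\<bar> + \<bar>w1 1\<bar>"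
      by (rule sside_upd[OF i1]) (auto simp: w1_def)
    then show ?thesis using aw1 unfolding k_def by simp
  qed
  have sw2: "sside d w2 = m3" using sw1 sside_cong[of d w2 w1] unfolding w2_def by auto
  obtain P1 where P1: "is_path_in d (Btw q0 q1) q0 q1 P1" "int (length P1) = norm1 d (\<lambda>i. q0 i - q1 i) + 1"
    using between_path[OF Z(1,2)] unfolding Btw_def by blast
  have n1: "norm1 d (\<lambda>i. q0 i - q1 i) = n - m1"
    unfolding norm1_split[OF d1] using sside_zero[of d "\<lambda>i. q0 i - q1 i"] assms hm
    by (simp add: q0_def q1_def unitv_def)
  have S1: "Btw q0 q1 \<subseteq> B"
  proof
    fix z assume z: "z \<in> Btw q0 q1"
    have zb: "\<And>i. min (q0 i) (q1 i) \<le> z i \<and> z i \<le> max (q0 i) (q1 i)"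
      using z unfolding Btw_def by auto
    have zi: "z i = 0" if "i \<noteq> 0" for i
    proof -
      have "q0 i = 0" "q1 i = 0" using that unfolding q0_def q1_def unitv_def by simp_all
      then show ?thesis using zb[of i] by simp
    qed
    have "q0 0 = - n" "q1 0 = - m1" unfolding q0_def q1_def unitv_def by simp_all
    then have z0: "- n \<le> z 0" "z 0 \<le> - m1" using zb[of 0] hm assms(8) by (simp_all add: min_def max_def)
    have "z = (\<lambda>i. z 0 * unitv 0 i)" using zi unfolding unitv_def by auto
    then have "z \<in> Lseg n m1" unfolding Lseg_def using z0 by blast
    then show "z \<in> B" unfolding B_def by simp
  qed
  obtain P2 where P2: "is_path_in d (Btw q1 w1) q1 w1 P2" "int (length P2) = norm1 d (\<lambda>i. q1 i - w1 i) + 1"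
    using between_path[OF Z(2,3)] unfolding Btw_def by blast
  have n2: "norm1 d (\<lambda>i. q1 i - w1 i) = m3"
  proof -
    have "sside d (\<lambda>i. q1 i - w1 i) = sside d w1"
      unfolding sside_def by (rule sum.cong) (auto simp: q1_def unitv_def)
    then show ?thesis unfolding norm1_split[OF d1] using sw1 by (simp add: q1_def w1_def unitv_def)
  qed
  have S2: "Btw q1 w1 \<subseteq> B"
  proof
    fix z assume z: "z \<in> Btw q1 w1"
    have zb: "\<And>i. min (q1 i) (w1 i) \<le> z i \<and> z i \<le> max (q1 i) (w1 i)"
      using z unfolding Btw_def by auto
    have "q1 0 = - m1" "w1 0 = - m1" unfolding q1_def w1_def unitv_def by simp_all
    then have z0: "z 0 = - m1" using zb[of 0] by simp
    have "sside d z \<le> sside d w1" unfolding sside_def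
    proof (rule sum_mono)
      fix i assume "i \<in> {1..<d}"
      then have "q1 i = 0" unfolding q1_def unitv_def by simp
      then have "min 0 (w1 i) \<le> z i \<and> z i \<le> max 0 (w1 i)" using zb[of i] by simp
      then show "\<bar>z i\<bar> \<le> \<bar>w1 i\<bar>" by (cases "w1 i \<le> 0") (auto simp: min_def max_def split: if_splits)
    qed
    then have "z \<in> Rhat d m1 m2 m3" using z z0 sw1 assms
      by (intro Rhat_intro) (auto simp: Btw_def)
    then show "z \<in> B" unfolding B_def by simp
  qed
  obtain P3 where P3: "is_path_in d (Btw w1 w2) w1 w2 P3" "int (length P3) = norm1 d (\<lambda>i. w1 i - w2 i) + 1"
    using between_path[OF Z(3,4)] unfolding Btw_def by blast
  have n3: "norm1 d (\<lambda>i. w1 i - w2 i) = y 0 + m1"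
    unfolding norm1_split[OF d1] using sside_zero[of d "\<lambda>i. w1 i - w2 i"] yc
    by (simp add: w1_def w2_def)
  have S3: "Btw w1 w2 \<subseteq> B"
  proof
    fix z assume z: "z \<in> Btw w1 w2"
    have zz: "z \<in> Zd d" and zb: "\<And>i. min (w1 i) (w2 i) \<le> z i \<and> z i \<le> max (w1 i) (w2 i)"
      using z unfolding Btw_def by auto
    have zi: "z i = w1 i" if "i \<noteq> 0" for i
    proof -
      have "w2 i = w1 i" using that unfolding w2_def by simp
      then show ?thesis using zb[of i] by simp
    qed
    have "w1 0 = - m1" "w2 0 = y 0" unfolding w1_def w2_def by simp_all
    then have z0: "- m1 \<le> z 0" "z 0 \<le> m2" using zb[of 0] yc by (auto simp: min_def max_def split: if_splits)
    have "sside d z = sside d w1" by (rule sside_cong) (use zi in auto)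
    then have "sside d z = m3" using sw1 by simp
    then have "z \<in> Rhat d m1 m2 m3" using zz z0 assms(1)
      by (intro Rhat_intro) auto
    then show "z \<in> B" unfolding B_def by simp
  qed
  obtain P4 where P4: "is_path_in d (Btw w2 y) w2 y P4" "int (length P4) = norm1 d (\<lambda>i. w2 i - y i) + 1"
    using between_path[OF Z(4)] yc unfolding Btw_def by blast
  have n4: "norm1 d (\<lambda>i. w2 i - y i) = k"
  proof -
    have "sside d (\<lambda>i. w2 i - y i) = sside d (\<lambda>i. 0) - \<bar>0\<bar> + \<bar>w2 1 - y 1\<bar>"
      by (rule sside_upd[OF i1]) (auto simp: w2_def w1_def)
    moreover have "\<bar>w2 1 - y 1\<bar> = k" using k0 unfolding w2_def w1_def sg_def by auto
    ultimately show ?thesis unfolding norm1_split[OF d1] using sside_zero[of d "\<lambda>i. 0::int"]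
      by (simp add: w2_def)
  qed
  have S4: "Btw w2 y \<subseteq> B"
  proof
    fix z assume z: "z \<in> Btw w2 y"
    have zz: "z \<in> Zd d" and zb: "\<And>i. min (w2 i) (y i) \<le> z i \<and> z i \<le> max (w2 i) (y i)"
      using z unfolding Btw_def by auto
    have z0: "z 0 = y 0" using zb[of 0] unfolding w2_def by simp
    have zi: "z i = y i" if "i \<noteq> 0" "i \<noteq> 1" for i
    proof -
      have "w2 i = y i" using that unfolding w2_def w1_def by simp
      then show ?thesis using zb[of i] by simp
    qed
    have w21: "w2 1 = y 1 + sg * k" unfolding w2_def w1_def by simp
    have z1: "\<bar>z 1\<bar> \<le> \<bar>y 1\<bar> + k \<and> (k = 0 \<longrightarrow> z 1 = y 1)"
    proof (cases "y 1 \<ge> 0")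
      case True
      then have "w2 1 = y 1 + k" using w21 unfolding sg_def by simp
      then have "min (y 1 + k) (y 1) \<le> z 1 \<and> z 1 \<le> max (y 1 + k) (y 1)" using zb[of 1] by simp
      then have "y 1 \<le> z 1" "z 1 \<le> y 1 + k" using k0 by linarith+
      then show ?thesis using True by auto
    next
      case False
      then have "w2 1 = y 1 - k" using w21 unfolding sg_def by simp
      then have "min (y 1 - k) (y 1) \<le> z 1 \<and> z 1 \<le> max (y 1 - k) (y 1)" using zb[of 1] by simp
      then have "y 1 - k \<le> z 1" "z 1 \<le> y 1" using k0 by linarith+
      then show ?thesis using False by auto
    qed
    have sz: "sside d z = sside d y - \<bar>y 1\<bar> + \<bar>z 1\<bar>"
      by (rule sside_upd[OF i1]) (use zi in auto)
    have sle: "sside d z \<le> m3" using sz z1 unfolding k_def by simp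
    have face: "z 0 = - m1 \<or> z 0 = m2 \<or> sside d z = m3"
    proof (cases "k = 0")
      case True then show ?thesis using sz z1 unfolding k_def by simp
    next
      case False
      then have "sside d y \<noteq> m3" unfolding k_def by simp
      then show ?thesis using yc z0 by auto
    qed
    have "z \<in> Rhat d m1 m2 m3" using zz z0 yc sle face assms(1)
      by (intro Rhat_intro) auto
    then show "z \<in> B" unfolding B_def by simp
  qed
  have BL: "B \<subseteq> Lambda d n"
  proof
    fix z assume "z \<in> B"
    then consider "z \<in> Rhat d m1 m2 m3" | "z \<in> Lseg n m1" unfolding B_def by blast
    then show "z \<in> Lambda d n"
    proof cases
      case 1
      note zc = Rhat_char[OF 1 d1]
      have "norm1 d z = \<bar>z 0\<bar> + sside d z" by (rule norm1_split[OF d1])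
      then have "norm1 d z \<le> n" using zc hm by (simp add: abs_if)
      then show ?thesis using zc unfolding Lambda_def by simp
    next
      case 2
      note zc = Lseg_char[OF 2 d1]
      have "norm1 d z = \<bar>z 0\<bar> + sside d z" by (rule norm1_split[OF d1])
      then have "norm1 d z \<le> n" using zc hm assms(6) by (simp add: abs_if)
      then show ?thesis using zc unfolding Lambda_def by simp
    qed
  qed
  have Q1: "is_path_in d B q0 q1 P1" using path_mono[OF P1(1) S1] .
  have Q2: "is_path_in d B q1 w1 P2" using path_mono[OF P2(1) S2] .
  have Q3: "is_path_in d B w1 w2 P3" using path_mono[OF P3(1) S3] .
  have Q4: "is_path_in d B w2 y P4" using path_mono[OF P4(1) S4] .
  note C12 = path_concat[OF Q1 Q2]
  note C123 = path_concat[OF conjunct1[OF C12] Q3]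
  note C = path_concat[OF conjunct1[OF C123] Q4]
  define P where "P = ((P1 @ tl P2) @ tl P3) @ tl P4"
  have PB: "is_path_in d B q0 y P" using C unfolding P_def by blast
  have ne: "length P1 \<ge> 1" "length P2 \<ge> 1" "length P3 \<ge> 1" "length P4 \<ge> 1"
    using Q1 Q2 Q3 Q4 unfolding is_path_in_def by (auto simp: Suc_le_eq)
  have lenP: "int (length P) = int (length P1) + int (length P2) + int (length P3) + int (length P4) - 3"
    using C C123 C12 ne unfolding P_def by auto
  have sy0: "sside d y \<ge> 0" by (rule sside_nonneg)
  have lenP2: "int (length P) - 1 \<le> n + 2*m3 + m2"
    using lenP P1(2) P2(2) P3(2) P4(2) n1 n2 n3 n4 yc sy0 unfolding k_def by linarith
  have lp1: "length P \<ge> 1" using PB unfolding is_path_in_def by (auto simp: Suc_le_eq)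
  have "real (length P - 1) = real_of_int (int (length P) - 1)" using lp1 by (simp add: of_nat_diff)
  also have "\<dots> \<le> real_of_int (n + 2*m3 + m2)" using lenP2 by (simp only: of_int_le_iff)
  finally have lenR: "real (length P - 1) \<le> real_of_int (n + 2*m3 + m2)" .
  have succP: "successively (adj d) P" using PB unfolding is_path_in_def succ_nth by blast
  have fastB: "\<forall>u w. u \<in> B \<longrightarrow> w \<in> B \<longrightarrow> adj d u w \<longrightarrow> \<tau> {u, w} \<le> a"
    using assms(11) unfolding event_E_def B_def by blast
  have "path_weight \<tau> P \<le> a * real (length P - 1)"
    by (rule path_ub[OF succP _ fastB]) (use PB in \<open>auto simp: is_path_in_def\<close>)
  also have "\<dots> \<le> a * real_of_int (n + 2*m3 + m2)" using lenR assms(3) by (intro mult_left_mono) auto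
  finally have wP: "path_weight \<tau> P \<le> a * (n + 2 * m3) + a * m2" by (simp add: algebra_simps)
  have PL: "is_path_in d (Lambda d n) q0 y P" using path_mono[OF PB BL] .
  have bdd: "bdd_below {path_weight \<tau> p | p. is_path_in d (Lambda d n) q0 y p}"
  proof (rule bdd_belowI[of _ 0])
    fix w assume "w \<in> {path_weight \<tau> p | p. is_path_in d (Lambda d n) q0 y p}"
    then obtain p where "w = path_weight \<tau> p" "is_path_in d (Lambda d n) q0 y p" by blast
    then show "0 \<le> w" using path_nonneg[OF _ assms(2), of p] unfolding is_path_in_def succ_nth by blast
  qed
  have "passage_time d \<tau> (Lambda d n) q0 y \<le> path_weight \<tau> P"
    unfolding passage_time_def by (rule cInf_lower[OF _ bdd]) (use PL in blast)
  then show ?thesis using wP unfolding q0_def by linarith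
qed


theorem lemma1:
  fixes d :: nat and a b \<epsilon> \<delta> :: real and n m1 m2 m3 :: int
    and \<tau> :: "pt set \<Rightarrow> real"
  assumes "d \<ge> 2"
    and "\<forall>e \<in> edges d. \<tau> e \<ge> 0"
    and "0 < a" and "a < b"
    and "\<epsilon> < (b - a) / (2 * b + 3 * a)"
    and "n \<ge> 1" and "m1 \<ge> 1" and "m2 \<ge> 1" and "m3 \<ge> 1"
    and "1 \<le> m2" and "m2 \<le> \<epsilon> * m3" and "\<epsilon> * m3 \<le> \<epsilon>^2 * m1"
    and "\<epsilon>^2 * m1 \<le> \<epsilon>^3 * n"
    and "\<delta> > 0"
    and "event_E d a b \<delta> n m1 m2 m3 \<tau>"
  shows "(\<forall>y \<in> Rhat d m1 m2 m3.
            passage_time d \<tau> (Lambda d n) (\<lambda>i. - n * unitv 0 i) y \<le> a * (n + 2 * m3) + a * m2)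
       \<and> (\<forall>x \<in> Zd d. norm1 d x = n \<longrightarrow>
            passage_time d \<tau> (Lambda d n) x (\<lambda>i. 0) \<ge> (a - \<delta>) * (n + 2 * m3) + b * m2)"
proof -
  have d1: "d \<ge> 1" using assms(1) by simp
  define c where "c = max (a - \<delta>) 0"
  have c0: "0 \<le> c" "c \<le> a" using assms(3,14) unfolding c_def by auto
  note P = params[of a b c \<epsilon> "of_int m1" "of_int m2" "of_int m3" "of_int n"]
  have h: "2*real_of_int m2 \<le> of_int m3" "2*real_of_int m3 \<le> of_int m1" "2*real_of_int m1 \<le> of_int n"
    using P assms c0 by auto
  have "real_of_int m2 \<le> real_of_int m1" using h assms(9) by linarith
  moreover have "real_of_int (m1 + m3) \<le> real_of_int n" using h assms(9) by simp
  ultimately have hm: "m2 \<le> m1" "m1 + m3 \<le> n" by (simp_all only: of_int_le_iff)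
  show ?thesis
  proof
    show "\<forall>y \<in> Rhat d m1 m2 m3.
            passage_time d \<tau> (Lambda d n) (\<lambda>i. - n * unitv 0 i) y \<le> a * (n + 2 * m3) + a * m2"
      using part1[OF assms(1-4,6-9) hm assms(15)] by blast
    show "\<forall>x \<in> Zd d. norm1 d x = n \<longrightarrow>
            passage_time d \<tau> (Lambda d n) x (\<lambda>i. 0) \<ge> (a - \<delta>) * (n + 2 * m3) + b * m2"
      using part2[OF assms] by blast
  qed
qed

end
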